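(* Let $R>0$, $Q,K,V\in\mathbb R^{k\times d}$ and $A:=K^\top Q/\sqrt k$. The mean-field self-attention map $F$ with parameters $(A,V)$ is $W_2$-Lipschitz continuous on $\mathcal P(B_R)$, and $$\mathrm{Lip}^{W_2}\big(F_{|\mathcal P(B_R)}\big)\le\|V\|_2\,(1+3\|A\|_2R^2)\,e^{2\|A\|_2R^2}.$$
   Context: $\mathcal P(B_R)$ is the set of Borel probability measures supported in the closed ball $B_R\subset\mathbb R^d$ of center $0$ and radius $R$. Mean-field self-attention with parameters $(A,V)$ maps a compactly supported probability measure $\mu$ on $\mathbb R^d$ to $F(\mu):=(\Gamma_\mu)_\sharp\mu$, where $\Gamma_\mu(x)=\dfrac{\int\exp(x^\top A^\top y)\,Vy\,d\mu(y)}{\int\exp(x^\top A^\top y)\,d\mu(y)}$ and $\varphi_\sharp\mu$ denotes the pushforward ($\varphi_\sharp\mu(B)=\mu(\varphi^{-1}(B))$). $W_2(\mu,\nu)=\big(\inf_{\pi\in\Pi(\mu,\nu)}\int|x-y|^2d\pi(x,y)\big)^{1/2}$ is the 2-Wasserstein distance, $\Pi(\mu,\nu)$ being the set of couplings. $\mathrm{Lip}^{W_2}(F_{|\mathcal X})=\sup_{\mu\ne\nu\in\mathcal X}W_2(F(\mu),F(\nu))/W_2(\mu,\nu)$. $\|\cdot\|_2$ is the spectral norm. *)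

theory Defs
  imports "HOL-Analysis.Analysis" "HOL-Probability.Probability"
begin

text \<open>Borel probability measures supported in the closed ball of center 0 and radius R.\<close>
definition prob_ball :: "real \<Rightarrow> ('a::euclidean_space) measure set" where
  "prob_ball R = {\<mu>. prob_space \<mu> \<and> sets \<mu> = sets borel \<and> emeasure \<mu> (UNIV - cball 0 R) = 0}"

text \<open>Couplings of two Borel measures.\<close>
definition couplings :: "('a::euclidean_space) measure \<Rightarrow> ('b::euclidean_space) measure \<Rightarrow> ('a \<times> 'b) measure set" where
  "couplings \<mu> \<nu> = {\<pi>. prob_space \<pi> \<and> sets \<pi> = sets (borel \<Otimes>\<^sub>M borel)
                       \<and> distr \<pi> borel fst = \<mu> \<and> distr \<pi> borel snd = \<nu>}"

text \<open>2-Wasserstein distance.\<close>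
definition W2 :: "('a::euclidean_space) measure \<Rightarrow> 'a measure \<Rightarrow> real" where
  "W2 \<mu> \<nu> = sqrt (enn2real (INF \<pi>\<in>couplings \<mu> \<nu>. \<integral>\<^sup>+ p. ennreal ((dist (fst p) (snd p))\<^sup>2) \<partial>\<pi>))"

text \<open>The map \<Gamma>_\<mu> of mean-field self-attention with parameters (A,V).\<close>
definition Gamma :: "real^'d^'d \<Rightarrow> real^'d^'k \<Rightarrow> (real^'d) measure \<Rightarrow> real^'d \<Rightarrow> real^'k" where
  "Gamma A V \<mu> x =
     (1 / (\<integral>y. exp ((A *v x) \<bullet> y) \<partial>\<mu>)) *\<^sub>R (\<integral>y. exp ((A *v x) \<bullet> y) *\<^sub>R (V *v y) \<partial>\<mu>)"

text \<open>Mean-field self-attention F(\<mu>) = (\<Gamma>_\<mu>)_# \<mu>.\<close>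
definition SA :: "real^'d^'d \<Rightarrow> real^'d^'k \<Rightarrow> (real^'d) measure \<Rightarrow> (real^'k) measure" where
  "SA A V \<mu> = distr \<mu> borel (Gamma A V \<mu>)"

end

theory Submission
  imports Defs
begin


locale bm = prob_space M for M :: "'a::euclidean_space measure" +
  fixes R :: real
  assumes sets_bm: "sets M = sets borel"
    and supp_bm: "AE z in M. norm z \<le> R"
begin

lemma meas_bm: "f \<in> borel_measurable borel \<Longrightarrow> f \<in> borel_measurable M"
  using measurable_cong_sets[OF sets_bm refl] by blast

lemma int_cont:
  fixes f :: "'a \<Rightarrow> 'b::{banach,second_countable_topology}"
  assumes "continuous_on UNIV f"
  shows "integrable M f"
proof -
  have "compact (f ` cball 0 R)"
    using assms by (intro compact_continuous_image) (auto intro: continuous_on_subset)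
  then obtain B where B: "\<And>z. z \<in> cball 0 R \<Longrightarrow> norm (f z) \<le> B"
    by (meson bounded_iff compact_imp_bounded imageI)
  show ?thesis
  proof (rule integrable_const_bound[where B=B])
    show "AE x in M. norm (f x) \<le> B" using supp_bm by eventually_elim (auto intro: B)
    show "f \<in> borel_measurable M"
      using assms by (intro meas_bm borel_measurable_continuous_onI) 
  qed
qed

end

definition Zf :: "real^'d^'d \<Rightarrow> (real^'d) measure \<Rightarrow> real^'d \<Rightarrow> real" where
  "Zf A M x = (\<integral>z. exp ((A *v x) \<bullet> z) \<partial>M)"
definition Nf :: "real^'d^'d \<Rightarrow> (real^'d) measure \<Rightarrow> real^'d \<Rightarrow> real^'d" where
  "Nf A M x = (\<integral>z. exp ((A *v x) \<bullet> z) *\<^sub>R z \<partial>M)"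
definition mf :: "real^'d^'d \<Rightarrow> (real^'d) measure \<Rightarrow> real^'d \<Rightarrow> real^'d" where
  "mf A M x = (1 / Zf A M x) *\<^sub>R Nf A M x"

lemma exp_diff_bound: fixes s t :: real shows "\<bar>exp s - exp t\<bar> \<le> max (exp s) (exp t) * \<bar>s - t\<bar>"
proof -
  have a: "exp t \<ge> exp s * (1 + (t - s))"
    using exp_ge_add_one_self[of "t - s"] by (simp add: exp_diff field_simps)
  have b: "exp s \<ge> exp t * (1 + (s - t))"
    using exp_ge_add_one_self[of "s - t"] by (simp add: exp_diff field_simps)
  show ?thesis
  proof (cases "s \<le> t")
    case True
    then have "\<bar>exp s - exp t\<bar> = exp t - exp s" by simp
    also have "\<dots> \<le> exp t * (t - s)" using b by (simp add: algebra_simps)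
    also have "\<dots> \<le> max (exp s) (exp t) * \<bar>s - t\<bar>" using True by (intro mult_mono) auto
    finally show ?thesis .
  next
    case False
    then have "\<bar>exp s - exp t\<bar> = exp s - exp t" by simp
    also have "\<dots> \<le> exp s * (s - t)" using a by (simp add: algebra_simps)
    also have "\<dots> \<le> max (exp s) (exp t) * \<bar>s - t\<bar>" using False by (intro mult_mono) auto
    finally show ?thesis .
  qed
qed

lemma inner_bound: "\<bar>(u::'a::real_inner) \<bullet> z\<bar> \<le> norm u * norm z"
  by (rule Cauchy_Schwarz_ineq2)

locale bmd = bm M R for M :: "(real^'d) measure" and R +
  fixes A :: "real^'d^'d"
begin

lemma int_w: "integrable M (\<lambda>z. exp ((A *v x) \<bullet> z))"
  by (rule int_cont) (intro continuous_intros)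
lemma int_wz: "integrable M (\<lambda>z. exp ((A *v x) \<bullet> z) *\<^sub>R z)"
  by (rule int_cont) (intro continuous_intros)

lemma Z_lower: "exp (- (norm (A *v x) * R)) \<le> Zf A M x"
proof -
  have "(\<integral>z. exp (- (norm (A *v x) * R)) \<partial>M) \<le> Zf A M x"
    unfolding Zf_def
  proof (rule integral_mono_AE)
    show "AE z in M. exp (- (norm (A *v x) * R)) \<le> exp ((A *v x) \<bullet> z)"
      using supp_bm
    proof eventually_elim
      case (elim z)
      have "\<bar>(A *v x) \<bullet> z\<bar> \<le> norm (A *v x) * norm z" by (rule inner_bound)
      also have "\<dots> \<le> norm (A *v x) * R" using elim by (intro mult_left_mono) auto
      finally show ?case by simp
    qed
  qed (auto intro: int_w)
  then show ?thesis by (simp add: prob_space)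
qed

lemma Z_pos: "Zf A M x > 0"
  using Z_lower[of x] by (meson exp_gt_zero less_le_trans)

lemma norm_N: "norm (Nf A M x) \<le> R * Zf A M x"
proof -
  have "norm (Nf A M x) \<le> (\<integral>z. norm (exp ((A *v x) \<bullet> z) *\<^sub>R z) \<partial>M)"
    unfolding Nf_def by (rule integral_norm_bound)
  also have "\<dots> \<le> (\<integral>z. R * exp ((A *v x) \<bullet> z) \<partial>M)"
  proof (rule integral_mono_AE)
    show "AE z in M. norm (exp ((A *v x) \<bullet> z) *\<^sub>R z) \<le> R * exp ((A *v x) \<bullet> z)"
      using supp_bm by eventually_elim (simp add: mult.commute)
  qed (intro int_cont continuous_intros)+
  also have "\<dots> = R * Zf A M x" unfolding Zf_def by simp
  finally show ?thesis .
qed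

lemma norm_m: "norm (mf A M x) \<le> R"
  using norm_N[of x] Z_pos[of x] unfolding mf_def by (simp add: field_simps)

lemma N_eq: "Nf A M x = Zf A M x *\<^sub>R mf A M x"
  using Z_pos[of x] unfolding mf_def by simp

lemma Gamma_eq: "Gamma A V M x = V *v mf A M x"
proof -
  have "(\<integral>y. exp ((A *v x) \<bullet> y) *\<^sub>R (V *v y) \<partial>M) = (\<integral>y. V *v (exp ((A *v x) \<bullet> y) *\<^sub>R y) \<partial>M)"
    by (simp add: matrix_vector_mult_scaleR)
  also have "\<dots> = V *v Nf A M x"
    unfolding Nf_def by (rule integral_bounded_linear) (auto intro: int_wz)
  finally show ?thesis
    unfolding Gamma_def mf_def Zf_def by (simp add: matrix_vector_mult_scaleR)
qed


lemma R_nonneg: "0 \<le> R"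
  using norm_m[of 0] norm_ge_zero order_trans by blast

lemma m_step:
  "norm (mf A M y - mf A M x) \<le> exp (2 * norm (A *v (y - x)) * R) * norm (A *v (y - x)) * R^2"
proof -
  define u where "u = A *v (y - x)"
  define nu where "nu = norm u"
  define f where "f z = exp ((A *v x) \<bullet> z)" for z
  define g where "g z = exp ((A *v y) \<bullet> z)" for z
  define m where "m = mf A M x"
  define c where "c = exp (u \<bullet> m)"
  define F where "F = Zf A M x"
  define G where "G = Zf A M y"
  have R0: "0 \<le> R" by (rule R_nonneg)
  have Fpos: "F > 0" unfolding F_def by (rule Z_pos)
  have Gpos: "G > 0" unfolding G_def by (rule Z_pos)
  have nm: "norm m \<le> R" unfolding m_def by (rule norm_m)
  have gf: "g z = f z * exp (u \<bullet> z)" for z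
    unfolding g_def f_def u_def
    by (simp add: matrix_vector_mult_diff_distrib inner_diff_left flip: exp_add)
  have ci: "continuous_on UNIV f" "continuous_on UNIV g"
    unfolding f_def g_def by (intro continuous_intros)+
  have int1: "integrable M (\<lambda>z. g z *\<^sub>R z)" "integrable M (\<lambda>z. f z *\<^sub>R z)"
    "integrable M g" "integrable M f"
    unfolding f_def g_def by (intro int_cont continuous_intros)+
  have Nx: "(\<integral>z. f z *\<^sub>R z \<partial>M) = F *\<^sub>R m"
    using N_eq[of x] unfolding Nf_def f_def F_def m_def by simp
  have Ny: "(\<integral>z. g z *\<^sub>R z \<partial>M) = G *\<^sub>R mf A M y"
    using N_eq[of y] unfolding Nf_def g_def G_def by simp
  have Fi: "(\<integral>z. f z \<partial>M) = F" unfolding f_def F_def Zf_def ..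
  have Gi: "(\<integral>z. g z \<partial>M) = G" unfolding g_def G_def Zf_def ..
  have key: "(\<integral>z. f z *\<^sub>R ((exp (u \<bullet> z) - c) *\<^sub>R (z - m)) \<partial>M) = G *\<^sub>R (mf A M y - m)"
  proof -
    have "(\<lambda>z. f z *\<^sub>R ((exp (u \<bullet> z) - c) *\<^sub>R (z - m))) =
          (\<lambda>z. (g z *\<^sub>R z - g z *\<^sub>R m) - c *\<^sub>R (f z *\<^sub>R z - f z *\<^sub>R m))"
      by (rule ext) (simp add: gf algebra_simps)
    then have "(\<integral>z. f z *\<^sub>R ((exp (u \<bullet> z) - c) *\<^sub>R (z - m)) \<partial>M) =
        ((\<integral>z. g z *\<^sub>R z \<partial>M) - (\<integral>z. g z \<partial>M) *\<^sub>R m) - c *\<^sub>R ((\<integral>z. f z *\<^sub>R z \<partial>M) - (\<integral>z. f z \<partial>M) *\<^sub>R m)"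
      using int1 by (simp add: integral_diff integral_scaleR_left)
    also have "\<dots> = G *\<^sub>R (mf A M y - m)"
      by (simp add: Nx Ny Fi Gi algebra_simps)
    finally show ?thesis .
  qed
  have pw: "AE z in M. norm (f z *\<^sub>R ((exp (u \<bullet> z) - c) *\<^sub>R (z - m)))
              \<le> (exp (nu * R) * nu) * (f z * norm (z - m)^2)"
    using supp_bm
  proof eventually_elim
    case (elim z)
    have e1: "exp (u \<bullet> z) \<le> exp (nu * R)"
      using inner_bound[of u z] elim unfolding nu_def
      by (smt (verit, best) exp_le_cancel_iff mult_left_mono norm_ge_zero)
    have e2: "c \<le> exp (nu * R)"
      using inner_bound[of u m] nm unfolding nu_def c_def
      by (smt (verit, best) exp_le_cancel_iff mult_left_mono norm_ge_zero)
    have "\<bar>exp (u \<bullet> z) - c\<bar> \<le> max (exp (u \<bullet> z)) c * \<bar>u \<bullet> z - u \<bullet> m\<bar>"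
      unfolding c_def by (rule exp_diff_bound)
    also have "\<dots> \<le> exp (nu * R) * (nu * norm (z - m))"
      using e1 e2 inner_bound[of u "z - m"] unfolding nu_def
      by (intro mult_mono) (auto simp: inner_diff_right)
    finally have b: "\<bar>exp (u \<bullet> z) - c\<bar> \<le> exp (nu * R) * (nu * norm (z - m))" .
    have "norm (f z *\<^sub>R ((exp (u \<bullet> z) - c) *\<^sub>R (z - m))) = f z * (\<bar>exp (u \<bullet> z) - c\<bar> * norm (z - m))"
      unfolding f_def by (simp add: abs_mult)
    also have "\<dots> \<le> f z * ((exp (nu * R) * (nu * norm (z - m))) * norm (z - m))"
      using b unfolding f_def by (intro mult_left_mono mult_right_mono) auto
    finally show ?case by (simp add: power2_eq_square algebra_simps)
  qed
  have var: "(\<integral>z. f z * norm (z - m)^2 \<partial>M) \<le> F * R^2"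
  proof -
    have ii: "(\<integral>z. f z * (z \<bullet> m) \<partial>M) = (\<integral>z. f z *\<^sub>R z \<partial>M) \<bullet> m"
      using integral_inner_left[of m M "\<lambda>z. f z *\<^sub>R z"] int1 by simp
    have "(\<lambda>z. f z * norm (z - m)^2) = (\<lambda>z. f z * norm z ^ 2 - 2 * ((f z *\<^sub>R z) \<bullet> m) + f z * norm m ^ 2)"
      by (rule ext) (simp add: power2_norm_eq_inner inner_diff_left inner_diff_right inner_commute algebra_simps)
    then have "(\<integral>z. f z * norm (z - m)^2 \<partial>M) =
        (\<integral>z. f z * norm z ^ 2 \<partial>M) - 2 * ((\<integral>z. f z *\<^sub>R z \<partial>M) \<bullet> m) + (\<integral>z. f z \<partial>M) * norm m ^ 2"
      using int1 ci by (simp add: integral_diff integral_add int_cont continuous_intros ii)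
    also have "\<dots> = (\<integral>z. f z * norm z ^ 2 \<partial>M) - F * norm m ^ 2"
      by (simp add: Nx Fi power2_norm_eq_inner)
    also have "\<dots> \<le> (\<integral>z. f z * norm z ^ 2 \<partial>M)" using Fpos by simp
    also have "\<dots> \<le> (\<integral>z. f z * R ^ 2 \<partial>M)"
    proof (rule integral_mono_AE)
      show "AE z in M. f z * norm z ^ 2 \<le> f z * R ^ 2"
        using supp_bm by eventually_elim (auto simp: f_def intro!: mult_left_mono power_mono)
    qed (use int1 ci in \<open>auto intro!: int_cont continuous_intros\<close>)
    also have "\<dots> = F * R^2" using Fi by simp
    finally show ?thesis .
  qed
  have GF: "exp (- (nu * R)) * F \<le> G"
  proof -
    have "(\<integral>z. exp (- (nu * R)) * f z \<partial>M) \<le> (\<integral>z. g z \<partial>M)"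
    proof (rule integral_mono_AE)
      show "AE z in M. exp (- (nu * R)) * f z \<le> g z"
        using supp_bm
      proof eventually_elim
        case (elim z)
        have "exp (- (nu * R)) \<le> exp (u \<bullet> z)"
          using inner_bound[of u z] elim unfolding nu_def
          by (smt (verit, best) exp_le_cancel_iff mult_left_mono norm_ge_zero)
        then show ?case unfolding gf by (simp add: f_def mult.commute)
      qed
    qed (use int1 in auto)
    then show ?thesis using Fi Gi by simp
  qed
  have "G * norm (mf A M y - m) = norm (G *\<^sub>R (mf A M y - m))" using Gpos by simp
  also have "\<dots> \<le> (\<integral>z. norm (f z *\<^sub>R ((exp (u \<bullet> z) - c) *\<^sub>R (z - m))) \<partial>M)"
    unfolding key[symmetric] by (rule integral_norm_bound)
  also have "\<dots> \<le> (\<integral>z. (exp (nu * R) * nu) * (f z * norm (z - m)^2) \<partial>M)"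
    using pw by (intro integral_mono_AE) (use ci in \<open>intro int_cont continuous_intros integrable_norm | simp add: c_def\<close>)+
  also have "\<dots> = (exp (nu * R) * nu) * (\<integral>z. f z * norm (z - m)^2 \<partial>M)" by simp
  also have "\<dots> \<le> (exp (nu * R) * nu) * (F * R^2)"
    using var unfolding nu_def by (intro mult_left_mono) auto
  also have "\<dots> \<le> (exp (nu * R) * nu) * ((exp (nu * R) * G) * R^2)"
  proof -
    have "F \<le> exp (nu * R) * G" using GF by (simp add: exp_minus field_simps)
    then show ?thesis unfolding nu_def by (intro mult_left_mono mult_right_mono) auto
  qed
  also have "\<dots> = G * (exp (2 * nu * R) * nu * R^2)"
  proof -
    have "exp (2 * nu * R) = exp (nu * R) * exp (nu * R)"
      using exp_add[of "nu * R" "nu * R"] by (metis mult.assoc mult_2)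
    then show ?thesis by (simp only: mult_ac)
  qed
  finally have "G * norm (mf A M y - m) \<le> G * (exp (2 * nu * R) * nu * R^2)" .
  then show ?thesis using Gpos unfolding m_def nu_def u_def by simp
qed


lemma m_lip:
  assumes "norm (x - y) \<le> 2 * R"
  shows "norm (mf A M x - mf A M y) \<le> exp (2 * onorm ((*v) A) * R^2) * (onorm ((*v) A) * R^2) * norm (x - y)"
proof -
  define a where "a = onorm ((*v) A)"
  define d where "d = norm (x - y)"
  define c where "c = x + (1/2) *\<^sub>R (y - x)"
  have a0: "0 \<le> a" unfolding a_def by (rule onorm_pos_le) simp
  have R0: "0 \<le> R" by (rule R_nonneg)
  have d0: "0 \<le> d" unfolding d_def by simp
  have hb: "norm (A *v v) \<le> a * (d / 2)" if "norm v = d / 2" for v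
    using onorm[of "(*v) A" v] that unfolding a_def by simp
  have n1: "norm (c - x) = d / 2" unfolding c_def d_def
    by (simp add: norm_minus_commute)
  have n2: "norm (y - c) = d / 2" unfolding c_def d_def
  proof -
    have h: "(1/2::real) *\<^sub>R (y - x) + (1/2::real) *\<^sub>R (y - x) = y - x"
      by (simp add: scaleR_add_left[symmetric])
    have e1: "y - (x + (1/2) *\<^sub>R (y - x)) = (1/2) *\<^sub>R (y - x)"
      by (metis h diff_diff_add add_diff_cancel)
    have e2: "norm ((1/2::real) *\<^sub>R (y - x)) = norm (x - y) / 2"
      by (simp add: norm_minus_commute)
    show "norm (y - (x + (1/2) *\<^sub>R (y - x))) = norm (x - y) / 2"
      by (simp only: e1 e2)
  qed
  have mono: "exp (2 * s * R) * s * R^2 \<le> exp (2 * (a * (d/2)) * R) * (a * (d/2)) * R^2"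
    if "0 \<le> s" "s \<le> a * (d / 2)" for s
  proof -
    have "2 * s * R \<le> 2 * (a * (d/2)) * R" using that R0 by (intro mult_right_mono) auto
    then have "exp (2 * s * R) \<le> exp (2 * (a * (d/2)) * R)" by simp
    then have "exp (2 * s * R) * s \<le> exp (2 * (a * (d/2)) * R) * (a * (d/2))"
      using that by (intro mult_mono) auto
    then show ?thesis by (intro mult_right_mono) auto
  qed
  have s1: "norm (mf A M c - mf A M x) \<le> exp (2 * (a * (d/2)) * R) * (a * (d/2)) * R^2"
    using m_step[of c x] mono[of "norm (A *v (c - x))"] hb[OF n1] by simp
  have s2: "norm (mf A M y - mf A M c) \<le> exp (2 * (a * (d/2)) * R) * (a * (d/2)) * R^2"
    using m_step[of y c] mono[of "norm (A *v (y - c))"] hb[OF n2] by simp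
  have "norm (mf A M x - mf A M y) = norm ((mf A M c - mf A M x) + (mf A M y - mf A M c))"
    by (simp add: norm_minus_commute)
  also have "\<dots> \<le> norm (mf A M c - mf A M x) + norm (mf A M y - mf A M c)"
    by (rule norm_triangle_ineq)
  also have "\<dots> \<le> 2 * (exp (2 * (a * (d/2)) * R) * (a * (d/2)) * R^2)" using s1 s2 by simp
  also have "\<dots> = exp (a * d * R) * (a * R^2) * d" by (simp add: algebra_simps)
  also have "\<dots> \<le> exp (2 * a * R^2) * (a * R^2) * d"
  proof -
    have "a * d * R \<le> 2 * a * R^2"
    proof -
      have "a * d * R \<le> a * (2 * R) * R"
        using assms a0 R0 unfolding d_def by (intro mult_right_mono mult_left_mono) auto
      then show ?thesis by (simp add: power2_eq_square mult_ac)
    qed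
    then show ?thesis using a0 R0 d0 by (intro mult_right_mono) auto
  qed
  finally show ?thesis unfolding a_def d_def .
qed

end

lemma norm_prod_le: "norm (p :: 'a::real_normed_vector \<times> 'b::real_normed_vector) \<le> norm (fst p) + norm (snd p)"
proof -
  have "norm p = sqrt ((norm (fst p))\<^sup>2 + (norm (snd p))\<^sup>2)" by (simp add: norm_prod_def)
  also have "\<dots> \<le> sqrt ((norm (fst p))\<^sup>2) + sqrt ((norm (snd p))\<^sup>2)" by (rule sqrt_add_le_add_sqrt) auto
  also have "\<dots> = norm (fst p) + norm (snd p)" by simp
  finally show ?thesis .
qed

locale cpl =
  fixes \<mu> \<nu> :: "(real^'d) measure" and \<pi> :: "((real^'d) \<times> (real^'d)) measure" and R :: real
  assumes bmu: "bm \<mu> R" and bnu: "bm \<nu> R" and ppi: "prob_space \<pi>"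
    and spi: "sets \<pi> = sets (borel \<Otimes>\<^sub>M borel)"
    and dfst: "distr \<pi> borel fst = \<mu>" and dsnd: "distr \<pi> borel snd = \<nu>"
begin

lemma mfst: "fst \<in> measurable \<pi> borel"
  using measurable_cong_sets[OF spi refl] measurable_fst by blast
lemma msnd: "snd \<in> measurable \<pi> borel"
  using measurable_cong_sets[OF spi refl] measurable_snd by blast

lemma spi': "sets \<pi> = sets borel"
  using spi borel_prod[where 'a="real^'d" and 'b="real^'d"] by metis

lemma ae_fst: "AE p in \<pi>. norm (fst p) \<le> R"
proof -
  have "AE z in distr \<pi> borel fst. norm z \<le> R" unfolding dfst by (rule bm.supp_bm[OF bmu])
  then show ?thesis by (subst (asm) AE_distr_iff) (auto intro: mfst)
qed
lemma ae_snd: "AE p in \<pi>. norm (snd p) \<le> R"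
proof -
  have "AE z in distr \<pi> borel snd. norm z \<le> R" unfolding dsnd by (rule bm.supp_bm[OF bnu])
  then show ?thesis by (subst (asm) AE_distr_iff) (auto intro: msnd)
qed

lemma bm_pi: "bm \<pi> (2 * R)"
proof -
  interpret prob_space \<pi> by (rule ppi)
  show ?thesis
  proof
    show "sets \<pi> = sets borel" by (rule spi')
    show "AE z in \<pi>. norm z \<le> 2 * R"
      using ae_fst ae_snd by eventually_elim (rule order_trans[OF norm_prod_le], simp)
  qed
qed

lemma int_fst: "h \<in> borel_measurable borel \<Longrightarrow> (\<integral>z. h z \<partial>\<mu>) = (\<integral>p. h (fst p) \<partial>\<pi>)"
  for h :: "real^'d \<Rightarrow> 'b::{banach,second_countable_topology}"
  using integral_distr[OF mfst, of h] dfst by simp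
lemma int_snd: "h \<in> borel_measurable borel \<Longrightarrow> (\<integral>z. h z \<partial>\<nu>) = (\<integral>p. h (snd p) \<partial>\<pi>)"
  for h :: "real^'d \<Rightarrow> 'b::{banach,second_countable_topology}"
  using integral_distr[OF msnd, of h] dsnd by simp

end


context cpl begin

lemma meas_term:
  fixes A :: "real^'d^'d"
  assumes y: "norm y \<le> R"
  shows "norm (mf A \<mu> y - mf A \<nu> y) \<le> exp (2 * onorm ((*v) A) * R^2) * (1 + 2 * onorm ((*v) A) * R^2) * (\<integral>p. norm (fst p - snd p) \<partial>\<pi>)"
proof -
  interpret P: bm \<pi> "2 * R" by (rule bm_pi)
  interpret Mu: bmd \<mu> R A using bmu by (simp add: bmd_def)
  interpret Nu: bmd \<nu> R A using bnu by (simp add: bmd_def)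
  define a where "a = onorm ((*v) A)"
  define t where "t = a * R^2"
  define \<phi> where "\<phi> z = exp ((A *v y) \<bullet> z)" for z
  define b where "b = norm (A *v y)"
  define D where "D = (\<integral>p. norm (fst p - snd p) \<partial>\<pi>)"
  define m1 where "m1 = mf A \<mu> y"
  define m2 where "m2 = mf A \<nu> y"
  define F where "F = Zf A \<mu> y"
  define G where "G = Zf A \<nu> y"
  have R0: "0 \<le> R" by (rule Mu.R_nonneg)
  have a0: "0 \<le> a" unfolding a_def by (rule onorm_pos_le) simp
  have b0: "0 \<le> b" unfolding b_def by simp
  have baR: "b \<le> a * R" using onorm[of "(*v) A" y] y a0 unfolding a_def b_def
    by (meson matrix_vector_mul_bounded_linear mult_left_mono order_trans)
  have bt: "b * R \<le> t" unfolding t_def power2_eq_square using baR R0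
    by (metis mult.assoc mult_right_mono)
  have t0: "0 \<le> t" unfolding t_def using a0 by simp
  have cphi: "continuous_on UNIV \<phi>" unfolding \<phi>_def by (intro continuous_intros)
  have mphi: "\<phi> \<in> borel_measurable borel" by (rule borel_measurable_continuous_onI[OF cphi])
  have phib: "\<phi> z \<le> exp t" if "norm z \<le> R" for z
  proof -
    have "(A *v y) \<bullet> z \<le> b * norm z" using inner_bound[of "A *v y" z] unfolding b_def by simp
    also have "\<dots> \<le> b * R" using that b0 by (intro mult_left_mono)
    finally show ?thesis using bt unfolding \<phi>_def by simp
  qed
  have phid: "\<bar>\<phi> z - \<phi> w\<bar> \<le> exp t * (a * R * norm (z - w))" if "norm z \<le> R" "norm w \<le> R" for z w
  proof -
    have "\<bar>\<phi> z - \<phi> w\<bar> \<le> max (\<phi> z) (\<phi> w) * \<bar>(A *v y) \<bullet> z - (A *v y) \<bullet> w\<bar>"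
      unfolding \<phi>_def by (rule exp_diff_bound)
    also have "\<dots> \<le> exp t * (a * R * norm (z - w))"
    proof (rule mult_mono)
      show "max (\<phi> z) (\<phi> w) \<le> exp t" using phib that by simp
      have "\<bar>(A *v y) \<bullet> z - (A *v y) \<bullet> w\<bar> \<le> b * norm (z - w)"
        using inner_bound[of "A *v y" "z - w"] unfolding b_def by (simp add: inner_diff_right)
      also have "\<dots> \<le> a * R * norm (z - w)" using baR by (intro mult_right_mono) auto
      finally show "\<bar>(A *v y) \<bullet> z - (A *v y) \<bullet> w\<bar> \<le> a * R * norm (z - w)" .
    qed auto
    finally show ?thesis .
  qed
  have iF: "F = (\<integral>p. \<phi> (fst p) \<partial>\<pi>)"
    unfolding F_def Zf_def using int_fst[OF mphi] unfolding \<phi>_def by simp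
  have iG: "G = (\<integral>p. \<phi> (snd p) \<partial>\<pi>)"
    unfolding G_def Zf_def using int_snd[OF mphi] unfolding \<phi>_def by simp
  have mphiz: "(\<lambda>z. \<phi> z *\<^sub>R z) \<in> borel_measurable borel"
    by (rule borel_measurable_continuous_onI) (use cphi in \<open>intro continuous_intros\<close>)
  have iN1: "F *\<^sub>R m1 = (\<integral>p. \<phi> (fst p) *\<^sub>R fst p \<partial>\<pi>)"
    using Mu.N_eq[of y] int_fst[OF mphiz] unfolding F_def m1_def Nf_def \<phi>_def by simp
  have iN2: "G *\<^sub>R m2 = (\<integral>p. \<phi> (snd p) *\<^sub>R snd p \<partial>\<pi>)"
    using Nu.N_eq[of y] int_snd[OF mphiz] unfolding G_def m2_def Nf_def \<phi>_def by simp
  have cpi: "continuous_on UNIV (\<lambda>p::(real^'d) \<times> (real^'d). \<phi> (fst p))"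
            "continuous_on UNIV (\<lambda>p::(real^'d) \<times> (real^'d). \<phi> (snd p))"
    using cphi by (auto intro!: continuous_intros intro: continuous_on_compose2[OF cphi])
  have ints: "integrable \<pi> (\<lambda>p. \<phi> (fst p) *\<^sub>R (fst p - snd p))"
     "integrable \<pi> (\<lambda>p. (\<phi> (fst p) - \<phi> (snd p)) *\<^sub>R snd p)"
     "integrable \<pi> (\<lambda>p. \<phi> (fst p) *\<^sub>R fst p)"
     "integrable \<pi> (\<lambda>p. \<phi> (snd p) *\<^sub>R snd p)"
     "integrable \<pi> (\<lambda>p. \<phi> (fst p))"
     "integrable \<pi> (\<lambda>p. \<phi> (snd p))"
     "integrable \<pi> (\<lambda>p. norm (fst p - snd p))"
    using cpi by (auto intro!: P.int_cont continuous_intros)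
  define I1 where "I1 = (\<integral>p. \<phi> (fst p) *\<^sub>R (fst p - snd p) \<partial>\<pi>)"
  define I2 where "I2 = (\<integral>p. (\<phi> (fst p) - \<phi> (snd p)) *\<^sub>R snd p \<partial>\<pi>)"
  have I12: "I1 + I2 = F *\<^sub>R m1 - G *\<^sub>R m2"
  proof -
    have "I1 + I2 = (\<integral>p. \<phi> (fst p) *\<^sub>R (fst p - snd p) + (\<phi> (fst p) - \<phi> (snd p)) *\<^sub>R snd p \<partial>\<pi>)"
      unfolding I1_def I2_def using ints by (simp add: integral_add)
    also have "\<dots> = (\<integral>p. \<phi> (fst p) *\<^sub>R fst p - \<phi> (snd p) *\<^sub>R snd p \<partial>\<pi>)"
      by (simp add: algebra_simps)
    also have "\<dots> = F *\<^sub>R m1 - G *\<^sub>R m2"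
      unfolding iN1 iN2 using ints by (simp add: integral_diff)
    finally show ?thesis .
  qed
  have GF: "G - F = (\<integral>p. \<phi> (snd p) - \<phi> (fst p) \<partial>\<pi>)"
    unfolding iF iG using ints by (simp add: integral_diff)
  have key: "F *\<^sub>R (m1 - m2) = I1 + I2 + (G - F) *\<^sub>R m2"
    using I12 by (simp add: algebra_simps)
  have nI1: "norm I1 \<le> exp t * D"
  proof -
    have "norm I1 \<le> (\<integral>p. norm (\<phi> (fst p) *\<^sub>R (fst p - snd p)) \<partial>\<pi>)"
      unfolding I1_def by (rule integral_norm_bound)
    also have "\<dots> \<le> (\<integral>p. exp t * norm (fst p - snd p) \<partial>\<pi>)"
    proof (rule integral_mono_AE)
      show "AE p in \<pi>. norm (\<phi> (fst p) *\<^sub>R (fst p - snd p)) \<le> exp t * norm (fst p - snd p)"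
        using ae_fst by eventually_elim (use phib in \<open>auto simp: \<phi>_def intro!: mult_right_mono\<close>)
    qed (use ints integrable_norm[OF ints(1)] in auto)
    also have "\<dots> = exp t * D" unfolding D_def by simp
    finally show ?thesis .
  qed
  have nI2: "norm I2 \<le> exp t * t * D"
  proof -
    have "norm I2 \<le> (\<integral>p. norm ((\<phi> (fst p) - \<phi> (snd p)) *\<^sub>R snd p) \<partial>\<pi>)"
      unfolding I2_def by (rule integral_norm_bound)
    also have "\<dots> \<le> (\<integral>p. (exp t * t) * norm (fst p - snd p) \<partial>\<pi>)"
    proof (rule integral_mono_AE)
      show "AE p in \<pi>. norm ((\<phi> (fst p) - \<phi> (snd p)) *\<^sub>R snd p) \<le> (exp t * t) * norm (fst p - snd p)"
        using ae_fst ae_snd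
      proof eventually_elim
        case (elim p)
        have "norm ((\<phi> (fst p) - \<phi> (snd p)) *\<^sub>R snd p) = \<bar>\<phi> (fst p) - \<phi> (snd p)\<bar> * norm (snd p)" by simp
        also have "\<dots> \<le> (exp t * (a * R * norm (fst p - snd p))) * R"
          using phid[OF elim] elim by (intro mult_mono) auto
        also have "\<dots> = (exp t * t) * norm (fst p - snd p)" unfolding t_def power2_eq_square by simp
        finally show ?case .
      qed
    qed (use ints integrable_norm[OF ints(2)] in auto)
    also have "\<dots> = exp t * t * D" unfolding D_def by simp
    finally show ?thesis .
  qed
  have nGF: "\<bar>G - F\<bar> \<le> exp t * (a * R) * D"
  proof -
    have "\<bar>G - F\<bar> \<le> (\<integral>p. \<bar>\<phi> (snd p) - \<phi> (fst p)\<bar> \<partial>\<pi>)"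
      unfolding GF by (rule integral_abs_bound)
    also have "\<dots> \<le> (\<integral>p. (exp t * (a * R)) * norm (fst p - snd p) \<partial>\<pi>)"
    proof (rule integral_mono_AE)
      show "AE p in \<pi>. \<bar>\<phi> (snd p) - \<phi> (fst p)\<bar> \<le> (exp t * (a * R)) * norm (fst p - snd p)"
        using ae_fst ae_snd
      proof eventually_elim
        case (elim p)
        show ?case using phid[OF elim] by (simp add: abs_minus_commute mult_ac)
      qed
    qed (use ints Bochner_Integration.integrable_abs[OF Bochner_Integration.integrable_diff[OF ints(6) ints(5)]] in auto)
    also have "\<dots> = exp t * (a * R) * D" unfolding D_def by simp
    finally show ?thesis .
  qed
  have nm2: "norm m2 \<le> R" unfolding m2_def by (rule Nu.norm_m)
  have D0: "0 \<le> D" unfolding D_def by simp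
  have "F * norm (m1 - m2) = norm (F *\<^sub>R (m1 - m2))" using Mu.Z_pos[of y] unfolding F_def by simp
  also have "\<dots> \<le> norm (I1 + I2) + norm ((G - F) *\<^sub>R m2)"
    unfolding key by (rule norm_triangle_ineq)
  also have "\<dots> \<le> norm I1 + norm I2 + \<bar>G - F\<bar> * norm m2"
    using norm_triangle_ineq[of I1 I2] by simp
  also have "\<dots> \<le> exp t * D + exp t * t * D + (exp t * (a * R) * D) * R"
  proof -
    have "\<bar>G - F\<bar> * norm m2 \<le> (exp t * (a * R) * D) * R"
      by (rule mult_mono[OF nGF nm2]) (use D0 a0 R0 in auto)
    then show ?thesis using nI1 nI2 by linarith
  qed
  also have "\<dots> = exp t * (1 + 2 * t) * D" unfolding t_def power2_eq_square by (simp add: algebra_simps)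
  finally have Fb: "F * norm (m1 - m2) \<le> exp t * (1 + 2 * t) * D" .
  have Flow: "exp (- t) \<le> F"
    using Mu.Z_lower[of y] bt unfolding F_def b_def by (meson exp_le_cancel_iff neg_le_iff_le order_trans)
  have Fpos: "0 < F" unfolding F_def by (rule Mu.Z_pos)
  have "norm (m1 - m2) \<le> exp t * (exp t * (1 + 2 * t) * D)"
  proof -
    have "norm (m1 - m2) = (F * norm (m1 - m2)) / F" using Fpos by simp
    also have "\<dots> \<le> (exp t * (1 + 2 * t) * D) / F" using Fb Fpos by (intro divide_right_mono) auto
    also have "\<dots> \<le> (exp t * (1 + 2 * t) * D) / exp (- t)"
      using Flow t0 D0 Fpos by (intro divide_left_mono) auto
    also have "\<dots> = exp t * (exp t * (1 + 2 * t) * D)" by (simp add: exp_minus divide_inverse mult_ac)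
    finally show ?thesis .
  qed
  also have "\<dots> = exp (2 * t) * (1 + 2 * t) * D"
  proof -
    have "exp (2 * t) = exp t * exp t" using exp_add[of t t] by (metis mult_2)
    then show ?thesis by (simp only: mult_ac)
  qed
  finally show ?thesis unfolding m1_def m2_def t_def a_def D_def by (simp add: mult_ac)
qed

end




context bm begin
lemma meas_param:
  fixes f :: "'c::euclidean_space \<Rightarrow> 'a \<Rightarrow> 'b::{banach,second_countable_topology}"
  assumes "(\<lambda>p. f (fst p) (snd p)) \<in> borel_measurable borel"
  shows "(\<lambda>x. \<integral>y. f x y \<partial>M) \<in> borel_measurable borel"
proof (rule borel_measurable_lebesgue_integral)
  have s1: "sets (borel \<Otimes>\<^sub>M M) = sets (borel \<Otimes>\<^sub>M (borel :: 'a measure))"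
    by (rule sets_pair_measure_cong) (auto simp: sets_bm)
  have s2: "(borel \<Otimes>\<^sub>M borel) = (borel :: ('c \<times> 'a) measure)" by (rule borel_prod)
  have s3: "sets (borel \<Otimes>\<^sub>M M) = sets (borel :: ('c \<times> 'a) measure)"
    using s1 s2 by metis
  have e: "(\<lambda>(x, y). f x y) = (\<lambda>p. f (fst p) (snd p))" by (rule ext) (simp add: split_beta)
  show "(\<lambda>(x, y). f x y) \<in> borel_measurable (borel \<Otimes>\<^sub>M M)"
    unfolding e measurable_cong_sets[OF s3 refl] by (rule assms)
qed
end

lemma cont_mv[continuous_intros]:
  fixes A :: "real^'n^'m"
  shows "continuous_on S f \<Longrightarrow> continuous_on S (\<lambda>x. A *v f x)"
  using bounded_linear.continuous_on[OF matrix_vector_mul_bounded_linear] by blast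

context bmd begin
lemma Gamma_meas: "Gamma A V M \<in> borel_measurable borel"
proof -
  have c1: "(\<lambda>x. \<integral>y. exp ((A *v x) \<bullet> y) \<partial>M) \<in> borel_measurable borel"
    by (rule meas_param, rule borel_measurable_continuous_onI) (intro continuous_intros)
  have c2: "(\<lambda>x. \<integral>y. exp ((A *v x) \<bullet> y) *\<^sub>R (V *v y) \<partial>M) \<in> borel_measurable borel"
    by (rule meas_param, rule borel_measurable_continuous_onI) (intro continuous_intros)
  have "Gamma A V M = (\<lambda>x. (1 / (\<integral>y. exp ((A *v x) \<bullet> y) \<partial>M)) *\<^sub>R (\<integral>y. exp ((A *v x) \<bullet> y) *\<^sub>R (V *v y) \<partial>M))"
    by (rule ext) (simp only: Gamma_def)
  then show ?thesis
    using c1 c2 by (simp only:) (intro borel_measurable_scaleR borel_measurable_divide borel_measurable_const)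
qed
end

context cpl begin

lemma pointwise:
  fixes A :: "real^'d^'d" and V :: "real^'d^'k"
  assumes x: "norm x \<le> R" and y: "norm y \<le> R"
  shows "norm (Gamma A V \<mu> x - Gamma A V \<nu> y) \<le> onorm ((*v) V) * exp (2 * onorm ((*v) A) * R^2) *
     (onorm ((*v) A) * R^2 * norm (x - y) + (1 + 2 * onorm ((*v) A) * R^2) * (\<integral>p. norm (fst p - snd p) \<partial>\<pi>))"
proof -
  interpret Mu: bmd \<mu> R A using bmu by (simp add: bmd_def)
  interpret Nu: bmd \<nu> R A using bnu by (simp add: bmd_def)
  define E where "E = exp (2 * onorm ((*v) A) * R^2)"
  define T where "T = onorm ((*v) A) * R^2"
  define c where "c = 1 + 2 * onorm ((*v) A) * R^2"
  define D where "D = (\<integral>p. norm (fst p - snd p) \<partial>\<pi>)"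
  have xy: "norm (x - y) \<le> 2 * R" using x y norm_triangle_ineq4[of x y] by linarith
  have l1: "norm (mf A \<mu> x - mf A \<mu> y) \<le> E * T * norm (x - y)"
    using Mu.m_lip[OF xy] unfolding E_def T_def .
  have l2: "norm (mf A \<mu> y - mf A \<nu> y) \<le> E * c * D"
    using meas_term[OF y, of A] unfolding E_def c_def D_def .
  have "Gamma A V \<mu> x - Gamma A V \<nu> y = V *v (mf A \<mu> x - mf A \<nu> y)"
    by (simp only: Mu.Gamma_eq Nu.Gamma_eq matrix_vector_mult_diff_distrib)
  then have "norm (Gamma A V \<mu> x - Gamma A V \<nu> y) = norm (V *v (mf A \<mu> x - mf A \<nu> y))"
    by (rule arg_cong)
  also have "\<dots> \<le> onorm ((*v) V) * norm (mf A \<mu> x - mf A \<nu> y)"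
    by (rule onorm) simp
  also have "\<dots> \<le> onorm ((*v) V) * (E * T * norm (x - y) + E * c * D)"
  proof (rule mult_left_mono)
    have e: "mf A \<mu> x - mf A \<nu> y = (mf A \<mu> x - mf A \<mu> y) + (mf A \<mu> y - mf A \<nu> y)" by simp
    have "norm (mf A \<mu> x - mf A \<nu> y) \<le> norm (mf A \<mu> x - mf A \<mu> y) + norm (mf A \<mu> y - mf A \<nu> y)"
      unfolding e by (rule norm_triangle_ineq)
    also have "\<dots> \<le> E * T * norm (x - y) + E * c * D"
      using l1 l2 by (rule add_mono)
    finally show "norm (mf A \<mu> x - mf A \<nu> y) \<le> E * T * norm (x - y) + E * c * D" .
  qed (rule onorm_pos_le, simp)
  also have "\<dots> = onorm ((*v) V) * E * (T * norm (x - y) + c * D)"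
    by (simp only: distrib_left mult.assoc)
  finally show ?thesis unfolding E_def T_def c_def D_def .
qed

end



lemma pb_bm: "\<mu> \<in> prob_ball R \<Longrightarrow> bm \<mu> R"
proof -
  assume "\<mu> \<in> prob_ball R"
  then have p: "prob_space \<mu>" and s: "sets \<mu> = sets borel" and e: "emeasure \<mu> (UNIV - cball 0 R) = 0"
    unfolding prob_ball_def by auto
  interpret prob_space \<mu> by (rule p)
  show ?thesis
  proof
    show "sets \<mu> = sets borel" by (rule s)
    have "UNIV - cball 0 R \<in> sets borel" by (intro borel_open) (simp add: open_Diff)
    then have "UNIV - cball 0 R \<in> null_sets \<mu>" using e s by (simp add: null_sets_def)
    then show "AE z in \<mu>. norm z \<le> R"
      by (rule AE_I') auto
  qed
qed

lemma (in prob_space) distr_pair_snd': "prob_space N \<Longrightarrow> distr (N \<Otimes>\<^sub>M M) M snd = M"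
proof (intro measure_eqI)
  assume N: "prob_space N"
  fix A assume A: "A \<in> sets (distr (N \<Otimes>\<^sub>M M) M snd)"
  then have A': "A \<in> sets M" by simp
  have "emeasure (distr (N \<Otimes>\<^sub>M M) M snd) A = emeasure (N \<Otimes>\<^sub>M M) (snd -` A \<inter> space (N \<Otimes>\<^sub>M M))"
    using A' by (subst emeasure_distr) auto
  also have "snd -` A \<inter> space (N \<Otimes>\<^sub>M M) = space N \<times> A"
    using sets.sets_into_space[OF A'] by (auto simp: space_pair_measure)
  also have "emeasure (N \<Otimes>\<^sub>M M) (space N \<times> A) = emeasure N (space N) * emeasure M A"
    using A' by (intro emeasure_pair_measure_Times) auto
  also have "\<dots> = emeasure M A" using prob_space.emeasure_space_1[OF N] by simp
  finally show "emeasure (distr (N \<Otimes>\<^sub>M M) M snd) A = emeasure M A" .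
qed simp

lemma prod_coupling:
  assumes "\<mu> \<in> prob_ball R" "\<nu> \<in> prob_ball R"
  shows "\<mu> \<Otimes>\<^sub>M \<nu> \<in> couplings \<mu> \<nu>"
proof -
  have pm: "prob_space \<mu>" and sm: "sets \<mu> = sets borel" using assms unfolding prob_ball_def by auto
  have pn: "prob_space \<nu>" and sn: "sets \<nu> = sets borel" using assms unfolding prob_ball_def by auto
  interpret pair_prob_space \<mu> \<nu>
    using pm pn by (simp add: pair_prob_space_def pair_sigma_finite_def prob_space_imp_sigma_finite)
  have "prob_space (\<mu> \<Otimes>\<^sub>M \<nu>)" by (rule P.prob_space_axioms)
  moreover have "sets (\<mu> \<Otimes>\<^sub>M \<nu>) = sets (borel \<Otimes>\<^sub>M borel)"
    by (rule sets_pair_measure_cong[OF sm sn])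
  moreover have "distr (\<mu> \<Otimes>\<^sub>M \<nu>) borel fst = \<mu>"
  proof -
    have "distr (\<mu> \<Otimes>\<^sub>M \<nu>) borel fst = distr (\<mu> \<Otimes>\<^sub>M \<nu>) \<mu> fst"
      by (rule distr_cong) (auto simp: sm)
    also have "\<dots> = \<mu>" by (rule M2.distr_pair_fst)
    finally show ?thesis .
  qed
  moreover have "distr (\<mu> \<Otimes>\<^sub>M \<nu>) borel snd = \<nu>"
  proof -
    have "distr (\<mu> \<Otimes>\<^sub>M \<nu>) borel snd = distr (\<mu> \<Otimes>\<^sub>M \<nu>) \<nu> snd"
      by (rule distr_cong) (auto simp: sn)
    also have "\<dots> = \<nu>" by (rule M2.distr_pair_snd'[OF pm])
    finally show ?thesis .
  qed
  ultimately show ?thesis unfolding couplings_def by auto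
qed




context cpl begin

lemma coupling_bound:
  fixes A :: "real^'d^'d" and V :: "real^'d^'k"
  defines "L \<equiv> onorm ((*v) V) * (1 + 3 * onorm ((*v) A) * R\<^sup>2) * exp (2 * onorm ((*v) A) * R\<^sup>2)"
  shows "\<exists>S\<ge>0. (\<integral>\<^sup>+ p. ennreal ((dist (fst p) (snd p))\<^sup>2) \<partial>\<pi>) = ennreal S \<and>
          (\<exists>\<pi>'\<in>couplings (SA A V \<mu>) (SA A V \<nu>).
             (\<integral>\<^sup>+ q. ennreal ((dist (fst q) (snd q))\<^sup>2) \<partial>\<pi>') \<le> ennreal (L\<^sup>2 * S))"
proof -
  interpret P: bm \<pi> "2 * R" by (rule bm_pi)
  interpret Mu: bmd \<mu> R A using bmu by (simp add: bmd_def)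
  interpret Nu: bmd \<nu> R A using bnu by (simp add: bmd_def)
  define \<Gamma>1 where "\<Gamma>1 = Gamma A V \<mu>"
  define \<Gamma>2 where "\<Gamma>2 = Gamma A V \<nu>"
  define \<Phi> where "\<Phi> p = (\<Gamma>1 (fst p), \<Gamma>2 (snd p))" for p
  define d where "d p = norm (fst p - snd p)" for p :: "(real^'d) \<times> (real^'d)"
  define D where "D = (\<integral>p. d p \<partial>\<pi>)"
  define S where "S = (\<integral>p. (d p)\<^sup>2 \<partial>\<pi>)"
  define E where "E = exp (2 * onorm ((*v) A) * R^2)"
  define T where "T = onorm ((*v) A) * R^2"
  define c where "c = 1 + 2 * onorm ((*v) A) * R^2"
  define K where "K = onorm ((*v) V) * E"
  have R0: "0 \<le> R" by (rule Mu.R_nonneg)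
  have a0: "0 \<le> onorm ((*v) A)" by (rule onorm_pos_le) simp
  have v0: "0 \<le> onorm ((*v) V)" by (rule onorm_pos_le) simp
  have T0: "0 \<le> T" unfolding T_def using a0 by simp
  have c0: "0 \<le> c" unfolding c_def using a0 by simp
  have K0: "0 \<le> K" unfolding K_def E_def using v0 by simp
  have LK: "L = K * (T + c)" unfolding L_def K_def T_def c_def E_def by (simp add: algebra_simps)
  have m1: "\<Gamma>1 \<in> borel_measurable borel" unfolding \<Gamma>1_def by (rule Mu.Gamma_meas)
  have m2: "\<Gamma>2 \<in> borel_measurable borel" unfolding \<Gamma>2_def by (rule Nu.Gamma_meas)
  have mPhi: "\<Phi> \<in> measurable \<pi> (borel \<Otimes>\<^sub>M borel)"
    unfolding \<Phi>_def
    by (intro measurable_Pair measurable_compose[OF mfst m1] measurable_compose[OF msnd m2])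
  define \<pi>' where "\<pi>' = distr \<pi> (borel \<Otimes>\<^sub>M borel) \<Phi>"
  have cd: "continuous_on UNIV d" unfolding d_def by (intro continuous_intros)
  have intd: "integrable \<pi> d" by (rule P.int_cont[OF cd])
  have intd2: "integrable \<pi> (\<lambda>p. (d p)\<^sup>2)" by (rule P.int_cont) (use cd in \<open>intro continuous_intros\<close>)
  have d0: "0 \<le> d p" for p unfolding d_def by simp
  \<comment> \<open>coupling\<close>
  have cpl': "\<pi>' \<in> couplings (SA A V \<mu>) (SA A V \<nu>)"
  proof -
    have "prob_space \<pi>'" unfolding \<pi>'_def by (rule prob_space.prob_space_distr[OF ppi mPhi])
    moreover have "sets \<pi>' = sets (borel \<Otimes>\<^sub>M borel)" unfolding \<pi>'_def by simp
    moreover have "distr \<pi>' borel fst = SA A V \<mu>"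
    proof -
      have "distr \<pi>' borel fst = distr \<pi> borel (fst \<circ> \<Phi>)"
        unfolding \<pi>'_def by (rule distr_distr[OF measurable_fst mPhi])
      also have "fst \<circ> \<Phi> = \<Gamma>1 \<circ> fst" unfolding \<Phi>_def by auto
      also have "distr \<pi> borel (\<Gamma>1 \<circ> fst) = distr (distr \<pi> borel fst) borel \<Gamma>1"
        by (rule distr_distr[OF m1 mfst, symmetric])
      also have "\<dots> = SA A V \<mu>" unfolding dfst SA_def \<Gamma>1_def ..
      finally show ?thesis .
    qed
    moreover have "distr \<pi>' borel snd = SA A V \<nu>"
    proof -
      have "distr \<pi>' borel snd = distr \<pi> borel (snd \<circ> \<Phi>)"
        unfolding \<pi>'_def by (rule distr_distr[OF measurable_snd mPhi])
      also have "snd \<circ> \<Phi> = \<Gamma>2 \<circ> snd" unfolding \<Phi>_def by auto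
      also have "distr \<pi> borel (\<Gamma>2 \<circ> snd) = distr (distr \<pi> borel snd) borel \<Gamma>2"
        by (rule distr_distr[OF m2 msnd, symmetric])
      also have "\<dots> = SA A V \<nu>" unfolding dsnd SA_def \<Gamma>2_def ..
      finally show ?thesis .
    qed
    ultimately show ?thesis unfolding couplings_def by auto
  qed
  \<comment> \<open>the original cost\<close>
  have IS: "(\<integral>\<^sup>+ p. ennreal ((dist (fst p) (snd p))\<^sup>2) \<partial>\<pi>) = ennreal S"
    unfolding S_def d_def dist_norm
    by (rule nn_integral_eq_integral) (use intd2 in \<open>auto simp: d_def\<close>)
  have S0: "0 \<le> S" unfolding S_def by (rule integral_nonneg_AE) simp
  have DS: "D\<^sup>2 \<le> S"
  proof -
    have "0 \<le> (\<integral>p. (d p - D)\<^sup>2 \<partial>\<pi>)" by (rule integral_nonneg_AE) simp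
    also have "(\<integral>p. (d p - D)\<^sup>2 \<partial>\<pi>) = (\<integral>p. (d p)\<^sup>2 - 2 * D * d p + D\<^sup>2 \<partial>\<pi>)"
      by (simp add: power2_eq_square algebra_simps)
    also have "\<dots> = S - 2 * D * D + D\<^sup>2"
      using intd intd2 unfolding S_def D_def by (simp add: integral_add integral_diff P.prob_space)
    finally show ?thesis by (simp add: power2_eq_square)
  qed
  \<comment> \<open>the new cost\<close>
  have mcost: "(\<lambda>q::(real^'d)\<times>(real^'d). ennreal ((dist (fst q) (snd q))\<^sup>2)) \<in> borel_measurable (borel \<Otimes>\<^sub>M borel)"
  proof -
    have md: "(\<lambda>q::(real^'d)\<times>(real^'d). dist (fst q) (snd q)) \<in> borel_measurable (borel \<Otimes>\<^sub>M borel)"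
      unfolding borel_prod by (rule borel_measurable_continuous_onI) (intro continuous_intros)
    have mg: "(\<lambda>x::real. ennreal (x\<^sup>2)) \<in> borel_measurable borel" by measurable
    show ?thesis using measurable_compose[OF md mg] .
  qed
  have "(\<integral>\<^sup>+ q. ennreal ((dist (fst q) (snd q))\<^sup>2) \<partial>\<pi>') =
        (\<integral>\<^sup>+ p. ennreal ((dist (\<Gamma>1 (fst p)) (\<Gamma>2 (snd p)))\<^sup>2) \<partial>\<pi>)"
    unfolding \<pi>'_def by (subst nn_integral_distr[OF mPhi]) (auto simp: \<Phi>_def intro: mcost)
  also have "\<dots> \<le> (\<integral>\<^sup>+ p. ennreal ((K * (T * d p + c * D))\<^sup>2) \<partial>\<pi>)"
  proof (rule nn_integral_mono_AE)
    show "AE p in \<pi>. ennreal ((dist (\<Gamma>1 (fst p)) (\<Gamma>2 (snd p)))\<^sup>2) \<le> ennreal ((K * (T * d p + c * D))\<^sup>2)"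
      using ae_fst ae_snd
    proof eventually_elim
      case (elim p)
      have "dist (\<Gamma>1 (fst p)) (\<Gamma>2 (snd p)) \<le> K * (T * d p + c * D)"
        using pointwise[OF elim, of A V] unfolding dist_norm \<Gamma>1_def \<Gamma>2_def K_def E_def T_def c_def d_def D_def
        by (simp add: mult.assoc)
      then show ?case by (intro ennreal_leI power_mono) auto
    qed
  qed
  also have "\<dots> = ennreal (\<integral>p. (K * (T * d p + c * D))\<^sup>2 \<partial>\<pi>)"
    by (rule nn_integral_eq_integral) (use cd in \<open>auto intro!: P.int_cont continuous_intros\<close>)
  also have "(\<integral>p. (K * (T * d p + c * D))\<^sup>2 \<partial>\<pi>) = K\<^sup>2 * (T\<^sup>2 * S + 2 * T * c * D * D + c\<^sup>2 * D\<^sup>2)"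
  proof -
    have "(\<lambda>p. (K * (T * d p + c * D))\<^sup>2) = (\<lambda>p. K\<^sup>2 * T\<^sup>2 * (d p)\<^sup>2 + (2 * K\<^sup>2 * T * c * D) * d p + K\<^sup>2 * c\<^sup>2 * D\<^sup>2)"
      by (rule ext) (simp add: power2_eq_square algebra_simps)
    then show ?thesis
      using intd intd2 unfolding S_def D_def by (simp add: integral_add P.prob_space algebra_simps)
  qed
  also have "ennreal (K\<^sup>2 * (T\<^sup>2 * S + 2 * T * c * D * D + c\<^sup>2 * D\<^sup>2)) \<le> ennreal (L\<^sup>2 * S)"
  proof (rule ennreal_leI)
    have "T\<^sup>2 * S + 2 * T * c * D * D + c\<^sup>2 * D\<^sup>2 \<le> T\<^sup>2 * S + 2 * T * c * S + c\<^sup>2 * S"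
    proof -
      have DD: "D * D \<le> S" using DS by (simp add: power2_eq_square)
      have "2 * T * c * D * D \<le> 2 * T * c * S"
        using mult_left_mono[OF DD, of "2 * T * c"] T0 c0 by (simp add: mult.assoc)
      moreover have "c\<^sup>2 * D\<^sup>2 \<le> c\<^sup>2 * S" using DS by (intro mult_left_mono) auto
      ultimately show ?thesis by linarith
    qed
    also have "\<dots> = (T + c)\<^sup>2 * S" by (simp add: power2_eq_square algebra_simps)
    finally have "K\<^sup>2 * (T\<^sup>2 * S + 2 * T * c * D * D + c\<^sup>2 * D\<^sup>2) \<le> K\<^sup>2 * ((T + c)\<^sup>2 * S)"
      by (intro mult_left_mono) auto
    then show "K\<^sup>2 * (T\<^sup>2 * S + 2 * T * c * D * D + c\<^sup>2 * D\<^sup>2) \<le> L\<^sup>2 * S"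
      unfolding LK by (simp add: power_mult_distrib mult.assoc)
  qed
  finally show ?thesis using IS S0 cpl' by blast
qed

end



lemma W2_bound:
  fixes V :: "real^'d^'k" and A :: "real^'d^'d" and R :: real
  assumes hm: "\<mu> \<in> prob_ball R" and hn: "\<nu> \<in> prob_ball R"
  shows "W2 (SA A V \<mu>) (SA A V \<nu>)
             \<le> onorm ((*v) V) * (1 + 3 * onorm ((*v) A) * R\<^sup>2) * exp (2 * onorm ((*v) A) * R\<^sup>2)
                 * W2 \<mu> \<nu>"
proof -
  define L where "L = onorm ((*v) V) * (1 + 3 * onorm ((*v) A) * R\<^sup>2) * exp (2 * onorm ((*v) A) * R\<^sup>2)"
  define I where "I \<pi> = (\<integral>\<^sup>+ p. ennreal ((dist (fst p) (snd p))\<^sup>2) \<partial>\<pi>)" for \<pi> :: "((real^'d) \<times> (real^'d)) measure"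
  define I' where "I' \<pi> = (\<integral>\<^sup>+ p. ennreal ((dist (fst p) (snd p))\<^sup>2) \<partial>\<pi>)" for \<pi> :: "((real^'k) \<times> (real^'k)) measure"
  define C where "C = couplings \<mu> \<nu>"
  define C' where "C' = couplings (SA A V \<mu>) (SA A V \<nu>)"
  define S0 where "S0 = (INF \<pi>\<in>C. I \<pi>)"
  define S0' where "S0' = (INF \<pi>\<in>C'. I' \<pi>)"
  have bmu: "bm \<mu> R" by (rule pb_bm[OF hm])
  have bnu: "bm \<nu> R" by (rule pb_bm[OF hn])
  have L0: "0 \<le> L" unfolding L_def
    by (intro mult_nonneg_nonneg onorm_pos_le) (auto intro!: add_nonneg_nonneg mult_nonneg_nonneg onorm_pos_le)
  have cb: "\<exists>S\<ge>0. I \<pi> = ennreal S \<and> (\<exists>\<pi>'\<in>C'. I' \<pi>' \<le> ennreal (L\<^sup>2 * S))" if "\<pi> \<in> C" for \<pi>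
  proof -
    have "cpl \<mu> \<nu> \<pi> R" using that bmu bnu unfolding C_def couplings_def cpl_def by auto
    from cpl.coupling_bound[OF this, where A=A and V=V] show ?thesis unfolding I_def I'_def C'_def L_def .
  qed
  have key: "enn2real S0' \<le> L\<^sup>2 * S" if hh: "\<pi> \<in> C" "I \<pi> = ennreal S" "0 \<le> S" for \<pi> S
  proof -
    obtain S1 \<pi>' where S1: "0 \<le> S1" "I \<pi> = ennreal S1" "\<pi>' \<in> C'" "I' \<pi>' \<le> ennreal (L\<^sup>2 * S1)"
      using cb[OF hh(1)] by blast
    have "S1 = S" using S1(1,2) hh(2,3) by simp
    have "S0' \<le> I' \<pi>'" unfolding S0'_def using S1(3) by (rule INF_lower)
    also have "\<dots> \<le> ennreal (L\<^sup>2 * S)" using S1(4) \<open>S1 = S\<close> by simp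
    finally have "enn2real S0' \<le> enn2real (ennreal (L\<^sup>2 * S))" by (rule enn2real_mono) simp
    then show ?thesis using hh(3) by simp
  qed
  have pc: "\<mu> \<Otimes>\<^sub>M \<nu> \<in> C" unfolding C_def by (rule prod_coupling[OF hm hn])
  obtain Sp where Sp: "0 \<le> Sp" "I (\<mu> \<Otimes>\<^sub>M \<nu>) = ennreal Sp" using cb[OF pc] by blast
  have S0fin: "S0 \<noteq> \<infinity>"
  proof -
    have "S0 \<le> I (\<mu> \<Otimes>\<^sub>M \<nu>)" unfolding S0_def using pc by (rule INF_lower)
    then show ?thesis using Sp by (auto simp: top_unique)
  qed
  define s0 where "s0 = enn2real S0"
  have s00: "0 \<le> s0" unfolding s0_def by simp
  have S0eq: "S0 = ennreal s0" unfolding s0_def using S0fin by (simp add: ennreal_enn2real_if)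
  have main: "enn2real S0' \<le> L\<^sup>2 * s0"
  proof (rule field_le_epsilon)
    fix e :: real assume e: "0 < e"
    define e' where "e' = e / (L\<^sup>2 + 1)"
    have Lp: "0 < L\<^sup>2 + 1" by (simp add: add_nonneg_pos)
    have e'0: "0 < e'" unfolding e'_def using e Lp by (rule divide_pos_pos)
    obtain \<pi> where \<pi>: "\<pi> \<in> C" "I \<pi> < S0 + ennreal e'"
      using INF_approx_ennreal[OF e'0 S0_def S0fin] by blast
    obtain S where S: "0 \<le> S" "I \<pi> = ennreal S" using cb[OF \<pi>(1)] by blast
    have "ennreal S < ennreal (s0 + e')" using \<pi>(2) S(2) S0eq s00 e'0 by (simp add: ennreal_plus)
    then have "S < s0 + e'" using S(1) by (simp add: ennreal_less_iff)
    have "enn2real S0' \<le> L\<^sup>2 * S" by (rule key[OF \<pi>(1) S(2) S(1)])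
    also have "\<dots> \<le> L\<^sup>2 * (s0 + e')" using \<open>S < s0 + e'\<close> by (intro mult_left_mono) auto
    also have "\<dots> = L\<^sup>2 * s0 + L\<^sup>2 * e'" by (simp add: algebra_simps)
    also have "L\<^sup>2 * e' \<le> e"
    proof -
      have "L\<^sup>2 * e' = e * (L\<^sup>2 / (L\<^sup>2 + 1))" unfolding e'_def by (simp add: field_simps)
      also have "\<dots> \<le> e * 1" using e Lp by (intro mult_left_mono) auto
      finally show ?thesis by simp
    qed
    finally show "enn2real S0' \<le> L\<^sup>2 * s0 + e" by simp
  qed
  have "W2 (SA A V \<mu>) (SA A V \<nu>) = sqrt (enn2real S0')"
    unfolding W2_def S0'_def I'_def C'_def ..
  also have "\<dots> \<le> sqrt (L\<^sup>2 * s0)" using main by simp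
  also have "\<dots> = L * sqrt s0" using L0 by (simp add: real_sqrt_mult)
  also have "sqrt s0 = W2 \<mu> \<nu>" unfolding W2_def s0_def S0_def I_def C_def ..
  finally show ?thesis unfolding L_def .
qed



theorem mainTheorem4:
  fixes Q K V :: "real^'d^'k" and R :: real
  assumes "R > 0"
  defines "A \<equiv> (1 / sqrt (real CARD('k))) *\<^sub>R (transpose K ** Q)"
  shows "\<forall>\<mu>\<in>prob_ball R. \<forall>\<nu>\<in>prob_ball R.
           W2 (SA A V \<mu>) (SA A V \<nu>)
             \<le> onorm ((*v) V) * (1 + 3 * onorm ((*v) A) * R\<^sup>2) * exp (2 * onorm ((*v) A) * R\<^sup>2)
                 * W2 \<mu> \<nu>"
  by (intro ballI W2_bound)

end
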